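(* Let $(F,\phi)$ be an extended representation graph for $E$, let $w$ be a source in $F$, and let $p,q$ be paths in $F$ (of length $\ge0$) with source $w$. Then $r(p)=r(q)$ if and only if $p=q$.
   Context: $E$ is a row-finite directed graph with, for each vertex $v$ emitting an edge, a chosen special edge $e^v\in s^{-1}(v)$; other edges are nonspecial. The double graph $E_d$ has vertices $E^0$ and edges $e$ (real) and $e^*$ (ghost) for $e\in E^1$, with $s_d(e)=s(e),r_d(e)=r(e),s_d(e^* )=r(e),r_d(e^* )=s(e)$. Paths of length $0$ are vertices $w$ with $s(w)=r(w)=w$. An extended representation graph for $E$ is a pair $(F,\phi)$, $F$ a directed graph, $\phi:F\to E_d$ a graph homomorphism, such that for every $w\in F^0$: (i) $w$ is a source (receives no edge) or receives exactly one edge $f_w$; (ii) if $w$ is a source or $\phi(f_w)$ is a nonspecial real edge, $\phi$ maps $s^{-1}(w)$ bijectively onto $s_d^{-1}(\phi(w))$; (iii) if $\phi(f_w)$ is a special real edge, onto $s_d^{-1}(\phi(w))\setminus\{\phi(f_w)^*\}$; (iv) if $\phi(f_w)$ is a ghost edge, onto the ghost edges in $s_d^{-1}(\phi(w))$. *)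

theory Defs
  imports Main
begin

record ('v, 'e) dgraph =
  verts :: "'v set"
  arcs  :: "'e set"
  src   :: "'e \<Rightarrow> 'v"
  rng   :: "'e \<Rightarrow> 'v"

definition wf_graph :: "('v, 'e) dgraph \<Rightarrow> bool" where
  "wf_graph G \<longleftrightarrow> (\<forall>e\<in>arcs G. src G e \<in> verts G \<and> rng G e \<in> verts G)"

definition out_arcs :: "('v, 'e) dgraph \<Rightarrow> 'v \<Rightarrow> 'e set" where
  "out_arcs G v = {e \<in> arcs G. src G e = v}"

definition row_finite :: "('v, 'e) dgraph \<Rightarrow> bool" where
  "row_finite G \<longleftrightarrow> (\<forall>v\<in>verts G. finite (out_arcs G v))"

definition is_source :: "('v, 'e) dgraph \<Rightarrow> 'v \<Rightarrow> bool" where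
  "is_source G v \<longleftrightarrow> (\<forall>e\<in>arcs G. rng G e \<noteq> v)"

definition special_choice :: "('v, 'e) dgraph \<Rightarrow> ('v \<Rightarrow> 'e) \<Rightarrow> bool" where
  "special_choice G sp \<longleftrightarrow>
     (\<forall>v\<in>verts G. out_arcs G v \<noteq> {} \<longrightarrow> sp v \<in> out_arcs G v)"

datatype 'e dedge = Real 'e | Ghost 'e

definition double_graph :: "('v, 'e) dgraph \<Rightarrow> ('v, 'e dedge) dgraph" where
  "double_graph G = \<lparr> verts = verts G,
     arcs = Real ` arcs G \<union> Ghost ` arcs G,
     src = (\<lambda>x. case x of Real e \<Rightarrow> src G e | Ghost e \<Rightarrow> rng G e),
     rng = (\<lambda>x. case x of Real e \<Rightarrow> rng G e | Ghost e \<Rightarrow> src G e) \<rparr>"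

definition graph_hom ::
  "('v, 'e) dgraph \<Rightarrow> ('a, 'b) dgraph \<Rightarrow> ('v \<Rightarrow> 'a) \<Rightarrow> ('e \<Rightarrow> 'b) \<Rightarrow> bool" where
  "graph_hom F G \<phi>V \<phi>E \<longleftrightarrow>
     (\<forall>v\<in>verts F. \<phi>V v \<in> verts G) \<and>
     (\<forall>f\<in>arcs F. \<phi>E f \<in> arcs G \<and> src G (\<phi>E f) = \<phi>V (src F f) \<and> rng G (\<phi>E f) = \<phi>V (rng F f))"

definition ext_rep_graph ::
  "('a, 'b) dgraph \<Rightarrow> ('a \<Rightarrow> 'b) \<Rightarrow> ('v, 'e) dgraph \<Rightarrow> ('v \<Rightarrow> 'a) \<Rightarrow> ('e \<Rightarrow> 'b dedge) \<Rightarrow> bool" where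
  "ext_rep_graph E sp F \<phi>V \<phi>E \<longleftrightarrow>
     wf_graph F \<and> graph_hom F (double_graph E) \<phi>V \<phi>E \<and>
     (\<forall>w\<in>verts F.
        (is_source F w \<and>
           bij_betw \<phi>E (out_arcs F w) (out_arcs (double_graph E) (\<phi>V w)))
      \<or> (\<exists>f\<in>arcs F. rng F f = w \<and> (\<forall>f'\<in>arcs F. rng F f' = w \<longrightarrow> f' = f) \<and>
           (case \<phi>E f of
              Real e \<Rightarrow>
                (if e = sp (src E e)
                 then bij_betw \<phi>E (out_arcs F w) (out_arcs (double_graph E) (\<phi>V w) - {Ghost e})
                 else bij_betw \<phi>E (out_arcs F w) (out_arcs (double_graph E) (\<phi>V w)))
            | Ghost e \<Rightarrow>
                bij_betw \<phi>E (out_arcs F w)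
                  {x \<in> out_arcs (double_graph E) (\<phi>V w). \<exists>g. x = Ghost g})))"

text \<open>Paths: a pair (start vertex, edge list). Length-0 paths are (w, []).
  A nonempty path's start vertex is the source of its first edge.\<close>
definition is_path :: "('v, 'e) dgraph \<Rightarrow> 'v \<times> 'e list \<Rightarrow> bool" where
  "is_path G p \<longleftrightarrow> (case p of (w, es) \<Rightarrow>
     w \<in> verts G \<and> set es \<subseteq> arcs G \<and>
     (es \<noteq> [] \<longrightarrow> src G (hd es) = w) \<and>
     (\<forall>i. Suc i < length es \<longrightarrow> rng G (es ! i) = src G (es ! Suc i)))"

definition path_src :: "'v \<times> 'e list \<Rightarrow> 'v" where
  "path_src p = fst p"

definition path_rng :: "('v, 'e) dgraph \<Rightarrow> 'v \<times> 'e list \<Rightarrow> 'v" where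
  "path_rng G p = (if snd p = [] then fst p else rng G (last (snd p)))"

end

theory Submission
  imports Defs
begin

lemma path_snoc:
  assumes "is_path G (w, xs @ [x])"
  shows "is_path G (w, xs) \<and> path_rng G (w, xs) = src G x \<and> x \<in> arcs G"
proof -
  have a: "w \<in> verts G" "set xs \<subseteq> arcs G" "x \<in> arcs G"
    "xs @ [x] \<noteq> [] \<longrightarrow> src G (hd (xs @ [x])) = w"
    "\<forall>i. Suc i < length (xs @ [x]) \<longrightarrow> rng G ((xs @ [x]) ! i) = src G ((xs @ [x]) ! Suc i)"
    using assms unfolding is_path_def by auto
  have "\<forall>i. Suc i < length xs \<longrightarrow> rng G (xs ! i) = src G (xs ! Suc i)"
  proof (intro allI impI)
    fix i assume "Suc i < length xs"
    then show "rng G (xs ! i) = src G (xs ! Suc i)"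
      using a(5)[rule_format, of i] by (simp add: nth_append)
  qed
  moreover have "xs \<noteq> [] \<longrightarrow> src G (hd xs) = w" using a(4) by auto
  moreover have "path_rng G (w, xs) = src G x"
  proof (cases "xs = []")
    case True then show ?thesis using a(4) by (simp add: path_rng_def)
  next
    case False
    then have "last xs = xs ! (length xs - 1)" by (simp add: last_conv_nth)
    moreover have "rng G ((xs @ [x]) ! (length xs - 1)) = src G ((xs @ [x]) ! length xs)"
      using a(5)[rule_format, of "length xs - 1"] False by simp
    ultimately show ?thesis using False by (simp add: path_rng_def nth_append)
  qed
  ultimately show ?thesis using a unfolding is_path_def by auto
qed

lemma paths_eq:
  assumes uniq: "\<And>f g. f \<in> arcs G \<Longrightarrow> g \<in> arcs G \<Longrightarrow> rng G f = rng G g \<Longrightarrow> f = g"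
    and srcw: "\<And>f. f \<in> arcs G \<Longrightarrow> rng G f \<noteq> w"
  shows "is_path G (w, xs) \<Longrightarrow> is_path G (w, ys) \<Longrightarrow> path_rng G (w, xs) = path_rng G (w, ys) \<Longrightarrow> xs = ys"
proof (induction xs arbitrary: ys rule: rev_induct)
  case Nil
  show ?case
  proof (cases ys rule: rev_cases)
    case (snoc ys' y)
    then show ?thesis using Nil path_snoc[of G w ys' y] srcw[of y] by (simp add: path_rng_def)
  qed simp
next
  case (snoc x xs)
  have px: "is_path G (w, xs) \<and> path_rng G (w, xs) = src G x \<and> x \<in> arcs G"
    by (rule path_snoc[OF snoc.prems(1)])
  show ?case
  proof (cases ys rule: rev_cases)
    case Nil
    then show ?thesis using snoc.prems px srcw[of x] by (simp add: path_rng_def)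
  next
    case (snoc ys' y)
    have py: "is_path G (w, ys') \<and> path_rng G (w, ys') = src G y \<and> y \<in> arcs G"
      using path_snoc[of G w ys' y] snoc.prems(2) snoc by simp
    have "rng G x = rng G y" using snoc.prems snoc by (simp add: path_rng_def)
    then have "x = y" using uniq px py by blast
    then have "xs = ys'" using snoc.IH px py by simp
    then show ?thesis using snoc \<open>x = y\<close> by simp
  qed
qed

theorem lemma5p5:
  fixes E :: "('a, 'b) dgraph" and sp :: "'a \<Rightarrow> 'b"
    and F :: "('v, 'e) dgraph" and \<phi>V :: "'v \<Rightarrow> 'a" and \<phi>E :: "'e \<Rightarrow> 'b dedge"
    and w :: 'v and p q :: "'v \<times> 'e list"
  assumes "wf_graph E" and "row_finite E" and "special_choice E sp"
    and "ext_rep_graph E sp F \<phi>V \<phi>E"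
    and "w \<in> verts F" and "is_source F w"
    and "is_path F p" and "is_path F q"
    and "path_src p = w" and "path_src q = w"
  shows "path_rng F p = path_rng F q \<longleftrightarrow> p = q"
proof
  assume eq: "path_rng F p = path_rng F q"
  have wf: "wf_graph F" using assms(4) unfolding ext_rep_graph_def by blast
  have uniq: "f = g" if "f \<in> arcs F" "g \<in> arcs F" "rng F f = rng F g" for f g
  proof -
    have v: "rng F f \<in> verts F" using wf that unfolding wf_graph_def by blast
    have "(is_source F (rng F f)) \<or> (\<exists>h\<in>arcs F. \<forall>f'\<in>arcs F. rng F f' = rng F f \<longrightarrow> f' = h)"
      using assms(4) v unfolding ext_rep_graph_def by blast
    then show ?thesis using that unfolding is_source_def by metis
  qed
  have srcw: "rng F f \<noteq> w" if "f \<in> arcs F" for f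
    using assms(6) that unfolding is_source_def by blast
  obtain xs where p: "p = (w, xs)" using assms(9) unfolding path_src_def by (cases p) auto
  obtain ys where q: "q = (w, ys)" using assms(10) unfolding path_src_def by (cases q) auto
  show "p = q" using paths_eq[OF uniq srcw, of xs ys] assms(7,8) eq p q by blast
qed simp

end
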